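(* An nfa $N$ accepting a regular language $L$ is subatomic if and only if the transition monoid of the dfa $\mathrm{rsc}(N^r)$ is isomorphic (as a monoid) to the syntactic monoid $\mathrm{Syn}(L^r)$.
   Context: An nfa $N=(Q,\delta,I,F)$: finite states, transition relations $\delta_a$, initial states $I$, final states $F$ (several initial states allowed). $N^r$ is the reverse nfa (transitions reversed, $I$ and $F$ swapped), accepting $L^r=\{w^r:w\in L\}$. $\mathrm{rsc}(N)$ is the dfa whose states are the subsets of $Q$ reachable from $I$ under $X\mapsto\delta_a[X]$, initial state $I$, final states the subsets meeting $F$. $N$ is subatomic if every state of $N$ accepts a language in $\mathrm{BLRQ}(L)$, the boolean subalgebra of $\mathcal{P}(\Sigma^* )$ generated by all two-sided derivatives $u^{-1}Lv^{-1}=\{w:uwv\in L\}$. The transition monoid of a dfa $D$ with transition functions $\delta_a$ is $\{\delta_w:w\in\Sigma^*\}$, where $\delta_w=\delta_{a_n}\circ\cdots\circ\delta_{a_1}$ for $w=a_1\cdots a_n$, with multiplication $\delta_v\cdot\delta_w=\delta_{vw}$ and unit $\delta_\epsilon$. The syntactic monoid $\mathrm{Syn}(K)$ is $\Sigma^*$ modulo the congruence $v\equiv_K w\iff\forall x,y\,(xvy\in K\Leftrightarrow xwy\in K)$. *)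

theory Defs
  imports "HOL-Algebra.Group"
begin

record ('s, 'a) nfa =
  states :: "'s set"
  trans  :: "'a \<Rightarrow> ('s \<times> 's) set"
  init   :: "'s set"
  final  :: "'s set"

definition nfa :: "('s, 'a) nfa \<Rightarrow> bool" where
  "nfa N \<longleftrightarrow> finite (states N) \<and> init N \<subseteq> states N \<and> final N \<subseteq> states N
     \<and> (\<forall>a. trans N a \<subseteq> states N \<times> states N)"

definition steps :: "('s, 'a) nfa \<Rightarrow> 'a list \<Rightarrow> 's set \<Rightarrow> 's set" where
  "steps N w X = fold (\<lambda>a Y. trans N a `` Y) w X"

definition nfa_lang :: "('s, 'a) nfa \<Rightarrow> 'a list set" where
  "nfa_lang N = {w. steps N w (init N) \<inter> final N \<noteq> {}}"

definition state_lang :: "('s, 'a) nfa \<Rightarrow> 's \<Rightarrow> 'a list set" where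
  "state_lang N q = {w. steps N w {q} \<inter> final N \<noteq> {}}"

definition rev_nfa :: "('s, 'a) nfa \<Rightarrow> ('s, 'a) nfa" where
  "rev_nfa N = \<lparr>states = states N, trans = (\<lambda>a. (trans N a)\<inverse>),
                init = final N, final = init N\<rparr>"

inductive_set BLRQ :: "'a list set \<Rightarrow> 'a list set set" for L where
  quot: "{w. u @ w @ v \<in> L} \<in> BLRQ L"
| empty: "{} \<in> BLRQ L"
| compl: "X \<in> BLRQ L \<Longrightarrow> - X \<in> BLRQ L"
| union: "X \<in> BLRQ L \<Longrightarrow> Y \<in> BLRQ L \<Longrightarrow> X \<union> Y \<in> BLRQ L"

definition subatomic :: "('s, 'a) nfa \<Rightarrow> bool" where
  "subatomic N \<longleftrightarrow> (\<forall>q \<in> states N. state_lang N q \<in> BLRQ (nfa_lang N))"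

record ('q, 'a) dfa =
  dstates :: "'q set"
  dtrans  :: "'a \<Rightarrow> 'q \<Rightarrow> 'q"
  dinit   :: "'q"
  dfinal  :: "'q set"

definition dsteps :: "('q, 'a) dfa \<Rightarrow> 'a list \<Rightarrow> 'q \<Rightarrow> 'q" where
  "dsteps D w = fold (dtrans D) w"

definition rsc :: "('s, 'a) nfa \<Rightarrow> ('s set, 'a) dfa" where
  "rsc N = \<lparr>dstates = {steps N w (init N) | w. True},
            dtrans = (\<lambda>a X. trans N a `` X),
            dinit = init N,
            dfinal = {X \<in> {steps N w (init N) | w. True}. X \<inter> final N \<noteq> {}}\<rparr>"

text \<open>Transition monoid: delta_v \<cdot> delta_w = delta_{vw} = delta_w o delta_v,
  functions taken on the state set of the dfa.\<close>
definition trans_monoid :: "('q, 'a) dfa \<Rightarrow> ('q \<Rightarrow> 'q) monoid" where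
  "trans_monoid D = \<lparr>carrier = {restrict (dsteps D w) (dstates D) | w. True},
                     mult = (\<lambda>f g. restrict (g \<circ> f) (dstates D)),
                     one = restrict id (dstates D)\<rparr>"

definition syn_cong :: "'a list set \<Rightarrow> ('a list \<times> 'a list) set" where
  "syn_cong K = {(v, w). \<forall>x y. x @ v @ y \<in> K \<longleftrightarrow> x @ w @ y \<in> K}"

definition syn_monoid :: "'a list set \<Rightarrow> 'a list set monoid" where
  "syn_monoid K = \<lparr>carrier = UNIV // syn_cong K,
                   mult = (\<lambda>X Y. syn_cong K `` {(SOME x. x \<in> X) @ (SOME y. y \<in> Y)}),
                   one = syn_cong K `` {[]}\<rparr>"

end

theory Submission
  imports Defs
begin

lemma steps_append: "steps N (u @ v) X = steps N v (steps N u X)"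
  by (simp add: steps_def)

lemma steps_Nil[simp]: "steps N [] X = X"
  by (simp add: steps_def)

lemma steps_Cons[simp]: "steps N (a # w) X = steps N w (trans N a `` X)"
  by (simp add: steps_def)

lemma steps_UN: "steps N w X = (\<Union>q\<in>X. steps N w {q})"
proof (induction w arbitrary: X)
  case Nil then show ?case by simp
next
  case (Cons a w)
  have e1: "steps N (a#w) X = (\<Union>p\<in>trans N a `` X. steps N w {p})"
    using Cons.IH[of "trans N a `` X"] by simp
  have e2: "steps N (a#w) {q} = (\<Union>p\<in>trans N a `` {q}. steps N w {p})" for q
    using Cons.IH[of "trans N a `` {q}"] by simp
  have e3: "(\<Union>p\<in>trans N a `` X. steps N w {p}) = (\<Union>q\<in>X. \<Union>p\<in>trans N a `` {q}. steps N w {p})"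
    by (auto simp: Image_def)
  show ?case unfolding e1 e2 e3 ..
qed

lemma steps_empty[simp]: "steps N w {} = {}"
  by (induction w) auto

lemma steps_sub: "nfa N \<Longrightarrow> X \<subseteq> states N \<Longrightarrow> steps N w X \<subseteq> states N"
proof (induction w arbitrary: X)
  case Nil then show ?case by simp
next
  case (Cons a w)
  have "trans N a `` X \<subseteq> states N" using Cons.prems unfolding nfa_def by blast
  then show ?case using Cons by simp
qed

lemma steps_rev: "steps (rev_nfa N) x Y = {q. steps N (rev x) {q} \<inter> Y \<noteq> {}}"
proof (induction x arbitrary: Y)
  case Nil then show ?case by auto
next
  case (Cons a x)
  have "steps (rev_nfa N) (a#x) Y = steps (rev_nfa N) x ((trans N a)\<inverse> `` Y)"
    by (simp add: rev_nfa_def)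
  also have "\<dots> = {q. steps N (rev x) {q} \<inter> (trans N a)\<inverse> `` Y \<noteq> {}}" using Cons by simp
  also have "\<dots> = {q. steps N [a] (steps N (rev x) {q}) \<inter> Y \<noteq> {}}" by auto
  also have "\<dots> = {q. steps N (rev (a#x)) {q} \<inter> Y \<noteq> {}}" by (simp add: steps_append)
  finally show ?case .
qed

lemma state_lang_out: "nfa N \<Longrightarrow> q \<notin> states N \<Longrightarrow> w \<notin> state_lang N q"
proof -
  assume n: "nfa N" and q: "q \<notin> states N"
  show ?thesis
  proof (cases w)
    case Nil then show ?thesis using n q by (auto simp: state_lang_def nfa_def)
  next
    case (Cons a w')
    have "trans N a `` {q} = {}" using n q unfolding nfa_def by blast
    then show ?thesis using Cons by (simp add: state_lang_def)
  qed
qed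

lemma lang_split: "x @ u \<in> nfa_lang N \<longleftrightarrow> (\<exists>p\<in>steps N x (init N). u \<in> state_lang N p)"
proof -
  have "steps N (x@u) (init N) = (\<Union>p\<in>steps N x (init N). steps N u {p})"
    unfolding steps_append by (rule steps_UN)
  then show ?thesis by (auto simp: nfa_lang_def state_lang_def)
qed

lemma state_lang_append: "u @ y \<in> state_lang N q \<longleftrightarrow> (\<exists>p\<in>steps N u {q}. y \<in> state_lang N p)"
proof -
  have "steps N (u@y) {q} = (\<Union>p\<in>steps N u {q}. steps N y {p})"
    unfolding steps_append by (rule steps_UN)
  then show ?thesis by (auto simp: state_lang_def)
qed

lemma equiv_syn: "equiv UNIV (syn_cong K)"
  unfolding equiv_def refl_on_def sym_def Relation.trans_def syn_cong_def by auto

lemma syn_right: "(u, u') \<in> syn_cong K \<Longrightarrow> (u @ y, u' @ y) \<in> syn_cong K"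
  unfolding syn_cong_def
proof (clarify)
  fix x z assume h: "\<forall>x y. x @ u @ y \<in> K \<longleftrightarrow> x @ u' @ y \<in> K"
  show "x @ (u @ y) @ z \<in> K \<longleftrightarrow> x @ (u' @ y) @ z \<in> K" using h[rule_format, of x "y @ z"] by simp
qed

lemma syn_left: "(u, u') \<in> syn_cong K \<Longrightarrow> (y @ u, y @ u') \<in> syn_cong K"
  unfolding syn_cong_def
proof (clarify)
  fix x z assume h: "\<forall>x y. x @ u @ y \<in> K \<longleftrightarrow> x @ u' @ y \<in> K"
  show "x @ (y @ u) @ z \<in> K \<longleftrightarrow> x @ (y @ u') @ z \<in> K" using h[rule_format, of "x @ y" z] by simp
qed

lemma syn_trans: "(a, b) \<in> syn_cong K \<Longrightarrow> (b, c) \<in> syn_cong K \<Longrightarrow> (a, c) \<in> syn_cong K"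
  unfolding syn_cong_def by auto

lemma syn_sym: "(a, b) \<in> syn_cong K \<Longrightarrow> (b, a) \<in> syn_cong K"
  unfolding syn_cong_def by auto

lemma rev_img_iff: "z \<in> rev ` L \<longleftrightarrow> rev z \<in> L"
  by (metis image_iff rev_rev_ident)

lemma syn_rev: "(v, w) \<in> syn_cong (rev ` L) \<longleftrightarrow> (rev v, rev w) \<in> syn_cong L"
proof
  assume h: "(v, w) \<in> syn_cong (rev ` L)"
  show "(rev v, rev w) \<in> syn_cong L"
    unfolding syn_cong_def
  proof (clarify)
    fix x y
    from h have "rev y @ v @ rev x \<in> rev ` L \<longleftrightarrow> rev y @ w @ rev x \<in> rev ` L"
      unfolding syn_cong_def by blast
    then show "x @ rev v @ y \<in> L \<longleftrightarrow> x @ rev w @ y \<in> L"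
      by (simp add: rev_img_iff)
  qed
next
  assume h: "(rev v, rev w) \<in> syn_cong L"
  show "(v, w) \<in> syn_cong (rev ` L)"
    unfolding syn_cong_def
  proof (clarify)
    fix x y
    from h have "rev y @ rev v @ rev x \<in> L \<longleftrightarrow> rev y @ rev w @ rev x \<in> L"
      unfolding syn_cong_def by blast
    then show "x @ v @ y \<in> rev ` L \<longleftrightarrow> x @ w @ y \<in> rev ` L"
      by (simp add: rev_img_iff)
  qed
qed

lemma BLRQ_sat: "X \<in> BLRQ L \<Longrightarrow> (u, u') \<in> syn_cong L \<Longrightarrow> u \<in> X \<longleftrightarrow> u' \<in> X"
proof (induction X rule: BLRQ.induct)
  case (quot a b) then show ?case unfolding syn_cong_def by auto
qed auto

lemma BLRQ_UNIV: "UNIV \<in> BLRQ L"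
  using BLRQ.compl[OF BLRQ.empty] by simp

lemma BLRQ_Int: "X \<in> BLRQ L \<Longrightarrow> Y \<in> BLRQ L \<Longrightarrow> X \<inter> Y \<in> BLRQ L"
proof -
  assume "X \<in> BLRQ L" "Y \<in> BLRQ L"
  then have "- (- X \<union> - Y) \<in> BLRQ L" by (intro BLRQ.intros)
  then show ?thesis by simp
qed

lemma BLRQ_Inter: "finite A \<Longrightarrow> A \<subseteq> BLRQ L \<Longrightarrow> \<Inter>A \<in> BLRQ L"
  by (induction A rule: finite_induct) (auto intro: BLRQ_UNIV BLRQ_Int)

lemma BLRQ_Union: "finite A \<Longrightarrow> A \<subseteq> BLRQ L \<Longrightarrow> \<Union>A \<in> BLRQ L"
  by (induction A rule: finite_induct) (auto intro: BLRQ.intros)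

lemma finite_quots:
  assumes n: "nfa N"
  shows "finite {{w. a @ w @ b \<in> nfa_lang N} | a b. True}"
proof -
  define g where "g = (\<lambda>(A, B). {w. steps N w A \<inter> B \<noteq> {}})"
  have I: "init N \<subseteq> states N" using n unfolding nfa_def by blast
  have "{w. a @ w @ b \<in> nfa_lang N} \<in> g ` (Pow (states N) \<times> Pow (states N))" for a b
  proof -
    let ?A = "steps N a (init N)"
    let ?B = "{q. steps N b {q} \<inter> final N \<noteq> {}} \<inter> states N"
    have A: "?A \<subseteq> states N" using steps_sub[OF n I] .
    have "w \<in> {w. a @ w @ b \<in> nfa_lang N} \<longleftrightarrow> steps N w ?A \<inter> ?B \<noteq> {}" for w
    proof -
      have sw: "steps N w ?A \<subseteq> states N" using steps_sub[OF n A] .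
      have "a @ w @ b \<in> nfa_lang N \<longleftrightarrow> steps N b (steps N w ?A) \<inter> final N \<noteq> {}"
        by (simp add: nfa_lang_def steps_append)
      also have "\<dots> \<longleftrightarrow> (\<exists>q\<in>steps N w ?A. steps N b {q} \<inter> final N \<noteq> {})"
        using steps_UN[of N b "steps N w ?A"] by auto
      also have "\<dots> \<longleftrightarrow> steps N w ?A \<inter> ?B \<noteq> {}" using sw by blast
      finally show ?thesis by simp
    qed
    then have "{w. a @ w @ b \<in> nfa_lang N} = g (?A, ?B)" unfolding g_def by auto
    moreover have "(?A, ?B) \<in> Pow (states N) \<times> Pow (states N)" using A by auto
    ultimately show ?thesis by blast
  qed
  then have "{{w. a @ w @ b \<in> nfa_lang N} | a b. True} \<subseteq> g ` (Pow (states N) \<times> Pow (states N))"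
    by blast
  moreover have "finite (states N)" using n unfolding nfa_def by blast
  ultimately show ?thesis by (meson finite_Pow_iff finite_SigmaI finite_imageI finite_subset)
qed

lemma sat_BLRQ:
  assumes n: "nfa N"
    and sat: "\<And>u u'. (u, u') \<in> syn_cong (nfa_lang N) \<Longrightarrow> u \<in> X \<longleftrightarrow> u' \<in> X"
  shows "X \<in> BLRQ (nfa_lang N)"
proof -
  let ?L = "nfa_lang N"
  define Qs where "Qs = {{w. a @ w @ b \<in> ?L} | a b. True}"
  have fQ: "finite Qs" using finite_quots[OF n] unfolding Qs_def .
  have QB: "Qs \<subseteq> BLRQ ?L" unfolding Qs_def by (auto intro: BLRQ.quot)
  define atom where "atom S = \<Inter>((\<lambda>Q. if Q \<in> S then Q else - Q) ` Qs)" for S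
  have atomB: "atom S \<in> BLRQ ?L" for S
    unfolding atom_def
    by (rule BLRQ_Inter) (use fQ QB in \<open>auto intro: BLRQ.compl\<close>)
  define at where "at w = atom {Q \<in> Qs. w \<in> Q}" for w
  have self: "w \<in> at w" for w unfolding at_def atom_def by auto
  have mem: "(v, w) \<in> syn_cong ?L" if "v \<in> at w" for v w
    unfolding syn_cong_def
  proof (clarify)
    fix a b
    let ?Q = "{w. a @ w @ b \<in> ?L}"
    have "?Q \<in> Qs" unfolding Qs_def by blast
    then have "v \<in> (if ?Q \<in> {Q \<in> Qs. w \<in> Q} then ?Q else - ?Q)"
      using that unfolding at_def atom_def by blast
    then show "a @ v @ b \<in> ?L \<longleftrightarrow> a @ w @ b \<in> ?L"
      using \<open>?Q \<in> Qs\<close> by (auto split: if_splits)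
  qed
  have eq: "X = \<Union>(at ` X)"
  proof
    show "X \<subseteq> \<Union>(at ` X)" using self by blast
    show "\<Union>(at ` X) \<subseteq> X" using mem sat by blast
  qed
  have "at ` X \<subseteq> atom ` Pow Qs" unfolding at_def by auto
  then have "finite (at ` X)" using fQ by (meson finite_Pow_iff finite_imageI finite_subset)
  moreover have "at ` X \<subseteq> BLRQ ?L" unfolding at_def using atomB by auto
  ultimately show ?thesis using eq BLRQ_Union by metis
qed

lemma dsteps_rsc: "dsteps (rsc M) w X = steps M w X"
  by (simp add: dsteps_def steps_def rsc_def)

lemma dstates_rsc: "dstates (rsc M) = {steps M x (init M) | x. True}"
  by (simp add: rsc_def)

lemma restrict_eq_iff: "restrict f A = restrict g A \<longleftrightarrow> (\<forall>x\<in>A. f x = g x)"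
  by (auto simp: fun_eq_iff restrict_def)

lemma hR: "steps (rev_nfa N) v (steps (rev_nfa N) x (final N)) = {q. rev v @ rev x \<in> state_lang N q}"
proof -
  have "steps (rev_nfa N) v (steps (rev_nfa N) x (final N)) = steps (rev_nfa N) (x @ v) (final N)"
    by (simp add: steps_append)
  also have "\<dots> = {q. rev v @ rev x \<in> state_lang N q}"
    unfolding steps_rev state_lang_def by simp
  finally show ?thesis .
qed

definition dl :: "('s, 'a) nfa \<Rightarrow> 'a list \<Rightarrow> 's set \<Rightarrow> 's set" where
  "dl N w = restrict (dsteps (rsc (rev_nfa N)) w) (dstates (rsc (rev_nfa N)))"

lemma dl_eq: "dl N v = dl N w \<longleftrightarrow> (\<forall>q y. rev v @ y \<in> state_lang N q \<longleftrightarrow> rev w @ y \<in> state_lang N q)"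
proof -
  have "dl N v = dl N w \<longleftrightarrow>
     (\<forall>x. steps (rev_nfa N) v (steps (rev_nfa N) x (final N)) = steps (rev_nfa N) w (steps (rev_nfa N) x (final N)))"
    unfolding dl_def restrict_eq_iff dsteps_rsc dstates_rsc by (auto simp: rev_nfa_def)
  also have "\<dots> \<longleftrightarrow> (\<forall>x q. rev v @ rev x \<in> state_lang N q \<longleftrightarrow> rev w @ rev x \<in> state_lang N q)"
    unfolding hR by blast
  also have "\<dots> \<longleftrightarrow> (\<forall>q y. rev v @ y \<in> state_lang N q \<longleftrightarrow> rev w @ y \<in> state_lang N q)"
    by (metis rev_rev_ident)
  finally show ?thesis .
qed

lemma dl_syn: "dl N v = dl N w \<Longrightarrow> (v, w) \<in> syn_cong (rev ` nfa_lang N)"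
proof -
  assume e: "dl N v = dl N w"
  have h0: "\<forall>q y. rev v @ y \<in> state_lang N q \<longleftrightarrow> rev w @ y \<in> state_lang N q"
    by (rule iffD1[OF dl_eq e])
  have h: "rev v @ y \<in> state_lang N q \<longleftrightarrow> rev w @ y \<in> state_lang N q" for q y
    using h0 by blast
  have "(rev v, rev w) \<in> syn_cong (nfa_lang N)"
    unfolding syn_cong_def
  proof (clarify)
    fix x y
    show "x @ rev v @ y \<in> nfa_lang N \<longleftrightarrow> x @ rev w @ y \<in> nfa_lang N"
      using lang_split[of x "rev v @ y" N] lang_split[of x "rev w @ y" N] h[of y] by auto
  qed
  then show ?thesis using syn_rev by blast
qed

lemma subatomic_iff:
  assumes n: "nfa N"
  shows "subatomic N \<longleftrightarrow> (\<forall>v w. (v, w) \<in> syn_cong (rev ` nfa_lang N) \<longrightarrow> dl N v = dl N w)"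
proof
  assume sa: "subatomic N"
  show "\<forall>v w. (v, w) \<in> syn_cong (rev ` nfa_lang N) \<longrightarrow> dl N v = dl N w"
  proof (intro allI impI)
    fix v w assume "(v, w) \<in> syn_cong (rev ` nfa_lang N)"
    then have s: "(rev v, rev w) \<in> syn_cong (nfa_lang N)" using syn_rev by blast
    have "rev v @ y \<in> state_lang N q \<longleftrightarrow> rev w @ y \<in> state_lang N q" for q y
    proof (cases "q \<in> states N")
      case True
      then have "state_lang N q \<in> BLRQ (nfa_lang N)" using sa unfolding subatomic_def by blast
      then show ?thesis using BLRQ_sat[OF _ syn_right[OF s, of y]] by blast
    next
      case False then show ?thesis using state_lang_out[OF n] by blast
    qed
    then show "dl N v = dl N w" by (intro iffD2[OF dl_eq] allI)
  qed
next
  assume inj: "\<forall>v w. (v, w) \<in> syn_cong (rev ` nfa_lang N) \<longrightarrow> dl N v = dl N w"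
  show "subatomic N"
    unfolding subatomic_def
  proof
    fix q assume "q \<in> states N"
    show "state_lang N q \<in> BLRQ (nfa_lang N)"
    proof (rule sat_BLRQ[OF n])
      fix u u' assume "(u, u') \<in> syn_cong (nfa_lang N)"
      then have "(rev u, rev u') \<in> syn_cong (rev ` nfa_lang N)" using syn_rev[of "rev u" "rev u'"] by simp
      then have "dl N (rev u) = dl N (rev u')" using inj by blast
      then have "\<forall>q y. rev (rev u) @ y \<in> state_lang N q \<longleftrightarrow> rev (rev u') @ y \<in> state_lang N q"
        by (rule iffD1[OF dl_eq])
      then have "rev (rev u) @ [] \<in> state_lang N q \<longleftrightarrow> rev (rev u') @ [] \<in> state_lang N q"
        by blast
      then show "u \<in> state_lang N q \<longleftrightarrow> u' \<in> state_lang N q" by simp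
    qed
  qed
qed

lemma nfa_rev: "nfa N \<Longrightarrow> nfa (rev_nfa N)"
  unfolding nfa_def rev_nfa_def by auto

lemma dstates_closed:
  "X \<in> dstates (rsc (rev_nfa N)) \<Longrightarrow> dsteps (rsc (rev_nfa N)) v X \<in> dstates (rsc (rev_nfa N))"
proof -
  assume "X \<in> dstates (rsc (rev_nfa N))"
  then obtain x where X: "X = steps (rev_nfa N) x (init (rev_nfa N))" unfolding dstates_rsc by blast
  have "dsteps (rsc (rev_nfa N)) v X = steps (rev_nfa N) (x @ v) (init (rev_nfa N))"
    unfolding X dsteps_rsc by (simp add: steps_append)
  then show ?thesis unfolding dstates_rsc by blast
qed

lemma carrier_T: "carrier (trans_monoid (rsc (rev_nfa N))) = range (dl N)"
  unfolding trans_monoid_def dl_def by auto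

lemma mult_T: "dl N v \<otimes>\<^bsub>trans_monoid (rsc (rev_nfa N))\<^esub> dl N w = dl N (v @ w)"
proof -
  let ?D = "rsc (rev_nfa N)"
  have "restrict (dl N w \<circ> dl N v) (dstates ?D) = dl N (v @ w)"
    unfolding dl_def restrict_eq_iff
  proof
    fix X assume X: "X \<in> dstates ?D"
    have "dsteps ?D v X \<in> dstates ?D" using dstates_closed[OF X] .
    then show "(restrict (dsteps ?D w) (dstates ?D) \<circ> restrict (dsteps ?D v) (dstates ?D)) X = dsteps ?D (v @ w) X"
      using X by (simp add: dsteps_rsc steps_append)
  qed
  then show ?thesis unfolding trans_monoid_def by simp
qed

lemma finite_T:
  assumes n: "nfa N"
  shows "finite (carrier (trans_monoid (rsc (rev_nfa N))))"
proof -
  let ?D = "rsc (rev_nfa N)"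
  have nr: "nfa (rev_nfa N)" using nfa_rev[OF n] .
  have "init (rev_nfa N) \<subseteq> states (rev_nfa N)" using nr unfolding nfa_def by blast
  then have "dstates ?D \<subseteq> Pow (states (rev_nfa N))"
    unfolding dstates_rsc using steps_sub[OF nr] by blast
  moreover have "finite (states (rev_nfa N))" using nr unfolding nfa_def by blast
  ultimately have fD: "finite (dstates ?D)" by (meson finite_Pow_iff finite_subset)
  have "carrier (trans_monoid ?D) \<subseteq> Pi\<^sub>E (dstates ?D) (\<lambda>_. dstates ?D)"
    unfolding carrier_T dl_def using dstates_closed by (auto simp: restrict_PiE_iff)
  moreover have "finite (Pi\<^sub>E (dstates ?D) (\<lambda>_. dstates ?D))" using fD by (simp add: finite_PiE)
  ultimately show ?thesis by (rule finite_subset)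
qed

definition phi :: "('s, 'a) nfa \<Rightarrow> ('s set \<Rightarrow> 's set) \<Rightarrow> 'a list set" where
  "phi N f = syn_cong (rev ` nfa_lang N) `` {SOME w. f = dl N w}"

lemma phi_dl: "phi N (dl N w) = syn_cong (rev ` nfa_lang N) `` {w}"
proof -
  let ?w = "SOME w'. dl N w = dl N w'"
  have "dl N w = dl N ?w" by (rule someI) (rule refl)
  then have "(?w, w) \<in> syn_cong (rev ` nfa_lang N)" using dl_syn by metis
  then show ?thesis unfolding phi_def using equiv_class_eq[OF equiv_syn] by blast
qed

lemma mult_S: "syn_cong K `` {v} \<otimes>\<^bsub>syn_monoid K\<^esub> syn_cong K `` {w} = syn_cong K `` {v @ w}"
proof -
  let ?x = "SOME x. x \<in> syn_cong K `` {v}"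
  let ?y = "SOME y. y \<in> syn_cong K `` {w}"
  have rv: "(v, v) \<in> syn_cong K" "(w, w) \<in> syn_cong K" unfolding syn_cong_def by auto
  have "?x \<in> syn_cong K `` {v}" by (rule someI[of _ v]) (use rv in auto)
  then have x: "(v, ?x) \<in> syn_cong K" by simp
  have "?y \<in> syn_cong K `` {w}" by (rule someI[of _ w]) (use rv in auto)
  then have y: "(w, ?y) \<in> syn_cong K" by simp
  have "(?x @ ?y, v @ w) \<in> syn_cong K"
    using syn_trans[OF syn_right[OF syn_sym[OF x], of ?y] syn_left[OF syn_sym[OF y], of v]] .
  then have "syn_cong K `` {?x @ ?y} = syn_cong K `` {v @ w}"
    using equiv_class_eq[OF equiv_syn] by blast
  then show ?thesis unfolding syn_monoid_def by simp
qed

lemma carrier_S: "carrier (syn_monoid K) = UNIV // syn_cong K"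
  unfolding syn_monoid_def by simp

lemma phi_image: "phi N ` carrier (trans_monoid (rsc (rev_nfa N))) = carrier (syn_monoid (rev ` nfa_lang N))"
  unfolding carrier_T carrier_S quotient_def using phi_dl by auto

lemma phi_hom: "phi N \<in> hom (trans_monoid (rsc (rev_nfa N))) (syn_monoid (rev ` nfa_lang N))"
  unfolding hom_def
proof (intro CollectI conjI ballI)
  show "phi N \<in> carrier (trans_monoid (rsc (rev_nfa N))) \<rightarrow> carrier (syn_monoid (rev ` nfa_lang N))"
    using phi_image by blast
next
  fix f g assume "f \<in> carrier (trans_monoid (rsc (rev_nfa N)))" "g \<in> carrier (trans_monoid (rsc (rev_nfa N)))"
  then obtain v w where "f = dl N v" "g = dl N w" unfolding carrier_T by blast
  then show "phi N (f \<otimes>\<^bsub>trans_monoid (rsc (rev_nfa N))\<^esub> g) =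
      phi N f \<otimes>\<^bsub>syn_monoid (rev ` nfa_lang N)\<^esub> phi N g"
    by (simp add: mult_T phi_dl mult_S)
qed

lemma phi_inj_iff:
  "inj_on (phi N) (carrier (trans_monoid (rsc (rev_nfa N)))) \<longleftrightarrow>
   (\<forall>v w. (v, w) \<in> syn_cong (rev ` nfa_lang N) \<longrightarrow> dl N v = dl N w)"
proof
  assume i: "inj_on (phi N) (carrier (trans_monoid (rsc (rev_nfa N))))"
  show "\<forall>v w. (v, w) \<in> syn_cong (rev ` nfa_lang N) \<longrightarrow> dl N v = dl N w"
  proof (intro allI impI)
    fix v w assume "(v, w) \<in> syn_cong (rev ` nfa_lang N)"
    then have "phi N (dl N v) = phi N (dl N w)"
      unfolding phi_dl using equiv_class_eq[OF equiv_syn] by blast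
    then show "dl N v = dl N w" using i unfolding carrier_T inj_on_def by blast
  qed
next
  assume h: "\<forall>v w. (v, w) \<in> syn_cong (rev ` nfa_lang N) \<longrightarrow> dl N v = dl N w"
  show "inj_on (phi N) (carrier (trans_monoid (rsc (rev_nfa N))))"
    unfolding carrier_T inj_on_def
  proof (clarify)
    fix v w assume "phi N (dl N v) = phi N (dl N w)"
    then have "syn_cong (rev ` nfa_lang N) `` {v} = syn_cong (rev ` nfa_lang N) `` {w}" by (simp add: phi_dl)
    then have "(v, w) \<in> syn_cong (rev ` nfa_lang N)"
      using eq_equiv_class_iff[OF equiv_syn] by blast
    then show "dl N v = dl N w" using h by blast
  qed
qed

theorem theorem4p12:
  fixes N :: "('s, 'a::finite) nfa"
  assumes "nfa N"
  shows "subatomic N \<longleftrightarrow>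
           trans_monoid (rsc (rev_nfa N)) \<cong> syn_monoid (rev ` nfa_lang N)"
proof
  assume "subatomic N"
  then have "inj_on (phi N) (carrier (trans_monoid (rsc (rev_nfa N))))"
    using subatomic_iff[OF assms] phi_inj_iff by blast
  then have "phi N \<in> iso (trans_monoid (rsc (rev_nfa N))) (syn_monoid (rev ` nfa_lang N))"
    unfolding iso_def bij_betw_def using phi_hom phi_image by blast
  then show "trans_monoid (rsc (rev_nfa N)) \<cong> syn_monoid (rev ` nfa_lang N)" by (rule is_isoI)
next
  assume "trans_monoid (rsc (rev_nfa N)) \<cong> syn_monoid (rev ` nfa_lang N)"
  then obtain h where "bij_betw h (carrier (trans_monoid (rsc (rev_nfa N)))) (carrier (syn_monoid (rev ` nfa_lang N)))"
    unfolding is_iso_def iso_def by blast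
  then have c: "card (carrier (trans_monoid (rsc (rev_nfa N)))) = card (carrier (syn_monoid (rev ` nfa_lang N)))"
    by (rule bij_betw_same_card)
  have "inj_on (phi N) (carrier (trans_monoid (rsc (rev_nfa N))))"
    using inj_on_iff_eq_card[OF finite_T[OF assms]] phi_image c by metis
  then show "subatomic N" using subatomic_iff[OF assms] phi_inj_iff by blast
qed

end
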